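(* If $Z=\{x_{A_1,i_1},x_{A_2,i_2},\dots,x_{A_n,i_n}\}$ is a sufficient subset of $Q_n$, then $i_1,i_2,\dots,i_n$ are pairwise distinct.
   Context: Fix a field $k$. $Q_n$ is the associative unital $k$-algebra with generators $x_{A,i}$ ($A\subseteq\{1,\dots,n\}$, $i\notin A$), called pseudo-roots, subject to $x_{A\cup\{i\},j}+x_{A,i}=x_{A\cup\{j\},i}+x_{A,j}$ and $x_{A\cup\{i\},j}\,x_{A,i}=x_{A\cup\{j\},i}\,x_{A,j}$ for all $A$ and $i\ne j$, $i,j\notin A$. With $t$ central, $\mathcal P(t)=(t-x_{A_n,i_n})\cdots(t-x_{A_1,i_1})$ for an ordering $(i_1,\dots,i_n)$ of $\{1,\dots,n\}$ and $A_k=\{i_1,\dots,i_{k-1}\}$ (independent of the ordering). A set $Y$ of pseudo-roots is defining if $\mathcal P(t)=(t-y_n)\cdots(t-y_1)$ with all $y_k\in Y$. The pseudo-root $x_{A,i}$ corresponds to an edge with tail $A\cup\{i\}$ and head $A$. For distinct pseudo-roots $x_{A,i},x_{B,j}$ with $A=B$, $\xi$ is obtained from the ordered pair by the $u$-operation if $(x_{A,i}-x_{B,j})x_{A,i}=\xi(x_{A,i}-x_{B,j})$; for distinct pseudo-roots with $A\cup\{i\}=B\cup\{j\}$, $\eta$ is obtained by the $d$-operation if $(x_{A,i}-x_{B,j})\eta=x_{A,i}(x_{A,i}-x_{B,j})$. The $du$-envelope of a set $Z$ of pseudo-roots is the set of pseudo-roots obtained from $Z$ by successive $d$- and $u$-operations;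 $Z$ is sufficient if its $du$-envelope contains a defining set. *)

theory Defs
  imports Main
begin

text \<open>A generator (pseudo-root symbol) x_{A,i} is represented by the pair (A,i).
  Elements of the free algebra k<gen> are functions from words to k
  (coefficient of each word); all elements we build have finite support.\<close>

type_synonym gen = "nat set \<times> nat"
type_synonym 'k fa = "gen list \<Rightarrow> 'k"

definition fa_zero :: "'k::field fa" where
  "fa_zero = (\<lambda>_. 0)"

definition fa_mon :: "gen list \<Rightarrow> 'k::field fa" where
  "fa_mon w = (\<lambda>v. if v = w then 1 else 0)"

definition fa_one :: "'k::field fa" where
  "fa_one = fa_mon []"

definition fa_gen :: "gen \<Rightarrow> 'k::field fa" where
  "fa_gen g = fa_mon [g]"

definition fa_add :: "'k::field fa \<Rightarrow> 'k fa \<Rightarrow> 'k fa" where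
  "fa_add p q = (\<lambda>w. p w + q w)"

definition fa_sub :: "'k::field fa \<Rightarrow> 'k fa \<Rightarrow> 'k fa" where
  "fa_sub p q = (\<lambda>w. p w - q w)"

definition fa_smult :: "'k::field \<Rightarrow> 'k fa \<Rightarrow> 'k fa" where
  "fa_smult c p = (\<lambda>w. c * p w)"

definition fa_mult :: "'k::field fa \<Rightarrow> 'k fa \<Rightarrow> 'k fa" where
  "fa_mult p q = (\<lambda>w. \<Sum>ab\<in>{(a, b). a @ b = w}. p (fst ab) * q (snd ab))"

definition pseudo_roots :: "nat \<Rightarrow> gen set" where
  "pseudo_roots n = {(A, i). A \<subseteq> {1..n} \<and> i \<in> {1..n} \<and> i \<notin> A}"

definition qrels :: "nat \<Rightarrow> 'k::field fa set" where
  "qrels n = {r. \<exists>A i j. A \<subseteq> {1..n} \<and> i \<in> {1..n} \<and> j \<in> {1..n} \<and> i \<notin> A \<and> j \<notin> A \<and> i \<noteq> j \<and>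
     (r = fa_sub (fa_add (fa_gen (insert i A, j)) (fa_gen (A, i)))
                 (fa_add (fa_gen (insert j A, i)) (fa_gen (A, j)))
      \<or> r = fa_sub (fa_mult (fa_gen (insert i A, j)) (fa_gen (A, i)))
                 (fa_mult (fa_gen (insert j A, i)) (fa_gen (A, j))))}"

text \<open>The two-sided ideal generated by the relations: k-linear combinations of
  u * r * v with u, v words and r a relation.\<close>
inductive_set qideal :: "nat \<Rightarrow> 'k::field fa set" for n where
  qideal_zero: "fa_zero \<in> qideal n"
| qideal_step: "r \<in> qrels n \<Longrightarrow> p \<in> qideal n \<Longrightarrow>
     fa_add (fa_smult c (fa_mult (fa_mult (fa_mon u) r) (fa_mon v))) p \<in> qideal n"

definition qeq :: "nat \<Rightarrow> 'k::field fa \<Rightarrow> 'k fa \<Rightarrow> bool" where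
  "qeq n p q \<longleftrightarrow> fa_sub p q \<in> qideal n"

text \<open>tprod [y_m, ..., y_1] k is the coefficient of t^k in (t - y_m) ... (t - y_1)
  (the leftmost list element is the leftmost factor).\<close>
fun tprod :: "gen list \<Rightarrow> nat \<Rightarrow> 'k::field fa" where
  "tprod [] k = (if k = 0 then fa_one else fa_zero)"
| "tprod (g # gs) k =
     fa_sub (if k = 0 then fa_zero else tprod gs (k - 1)) (fa_mult (fa_gen g) (tprod gs k))"

text \<open>The ordering (1,...,n): factors (t - x_{A_n,n}) ... (t - x_{A_1,1}), A_k = {1..k-1}.\<close>
definition std_roots :: "nat \<Rightarrow> gen list" where
  "std_roots n = map (\<lambda>k. ({1..<k}, k)) (rev [1..<n+1])"

definition defining :: "'k::field itself \<Rightarrow> nat \<Rightarrow> gen set \<Rightarrow> bool" where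
  "defining T n Y \<longleftrightarrow> Y \<subseteq> pseudo_roots n \<and>
     (\<exists>ys. length ys = n \<and> set ys \<subseteq> Y \<and>
        (\<forall>k. qeq n (tprod ys k :: 'k fa) (tprod (std_roots n) k)))"

definition u_op :: "'k::field itself \<Rightarrow> nat \<Rightarrow> gen \<Rightarrow> gen \<Rightarrow> gen \<Rightarrow> bool" where
  "u_op T n p q xi \<longleftrightarrow> p \<in> pseudo_roots n \<and> q \<in> pseudo_roots n \<and> xi \<in> pseudo_roots n \<and>
     p \<noteq> q \<and> fst p = fst q \<and>
     qeq n (fa_mult (fa_sub (fa_gen p) (fa_gen q)) (fa_gen p) :: 'k fa)
           (fa_mult (fa_gen xi) (fa_sub (fa_gen p) (fa_gen q)))"

definition d_op :: "'k::field itself \<Rightarrow> nat \<Rightarrow> gen \<Rightarrow> gen \<Rightarrow> gen \<Rightarrow> bool" where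
  "d_op T n p q eta \<longleftrightarrow> p \<in> pseudo_roots n \<and> q \<in> pseudo_roots n \<and> eta \<in> pseudo_roots n \<and>
     p \<noteq> q \<and> insert (snd p) (fst p) = insert (snd q) (fst q) \<and>
     qeq n (fa_mult (fa_sub (fa_gen p) (fa_gen q)) (fa_gen eta) :: 'k fa)
           (fa_mult (fa_gen p) (fa_sub (fa_gen p) (fa_gen q)))"

inductive_set du_envelope :: "'k::field itself \<Rightarrow> nat \<Rightarrow> gen set \<Rightarrow> gen set"
  for T n Z where
  env_base: "z \<in> Z \<Longrightarrow> z \<in> du_envelope T n Z"
| env_u: "p \<in> du_envelope T n Z \<Longrightarrow> q \<in> du_envelope T n Z \<Longrightarrow> u_op T n p q xi \<Longrightarrow>
     xi \<in> du_envelope T n Z"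
| env_d: "p \<in> du_envelope T n Z \<Longrightarrow> q \<in> du_envelope T n Z \<Longrightarrow> d_op T n p q eta \<Longrightarrow>
     eta \<in> du_envelope T n Z"

definition sufficient :: "'k::field itself \<Rightarrow> nat \<Rightarrow> gen set \<Rightarrow> bool" where
  "sufficient T n Z \<longleftrightarrow> (\<exists>Y \<subseteq> du_envelope T n Z. defining T n Y)"

end

theory Submission
  imports Defs "HOL-Computational_Algebra.Polynomial"
begin

definition supp :: "'k::field fa \<Rightarrow> gen list set" where
  "supp p = {w. p w \<noteq> 0}"

definition fin :: "'k::field fa \<Rightarrow> bool" where
  "fin p \<longleftrightarrow> finite (supp p)"

definition phi :: "gen \<Rightarrow> 'k::field poly" where
  "phi g = monom 1 (snd g)"

definition wv :: "gen list \<Rightarrow> 'k::field poly" where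
  "wv w = prod_list (map phi w)"

definition evS :: "gen list set \<Rightarrow> 'k::field fa \<Rightarrow> 'k poly" where
  "evS S p = (\<Sum>w\<in>S. smult (p w) (wv w))"

definition ev :: "'k::field fa \<Rightarrow> 'k poly" where
  "ev p = evS (supp p) p"

lemma evS_eq:
  assumes "finite S" "supp p \<subseteq> S"
  shows "evS S p = ev p"
  unfolding ev_def evS_def
  by (rule sum.mono_neutral_right) (use assms in \<open>auto simp: supp_def\<close>)

lemma smult_sum_right: "smult c (sum f S) = (\<Sum>i\<in>S. smult c (f i))"
  by (induct S rule: infinite_finite_induct) (auto simp: smult_add_right)

lemma wv_append: "wv (a @ b) = wv a * wv b"
  by (simp add: wv_def)

lemma fin_zero: "fin fa_zero" and ev_zero: "ev fa_zero = 0"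
  by (auto simp: fin_def supp_def fa_zero_def ev_def evS_def)

lemma supp_mon: "supp (fa_mon w) = {w}"
  by (auto simp: supp_def fa_mon_def)

lemma fin_mon: "fin (fa_mon w)" and ev_mon: "ev (fa_mon w) = wv w"
  unfolding fin_def ev_def supp_mon by (auto simp: evS_def fa_mon_def)

lemma fin_gen: "fin (fa_gen g)" and ev_gen: "ev (fa_gen g) = phi g"
  by (auto simp: fa_gen_def fin_mon ev_mon wv_def)

lemma fin_one: "fin fa_one" and ev_one: "ev fa_one = 1"
  by (auto simp: fa_one_def fin_mon ev_mon wv_def)

lemma fin_add: "fin p \<Longrightarrow> fin q \<Longrightarrow> fin (fa_add p q)"
proof -
  assume "fin p" "fin q"
  moreover have "supp (fa_add p q) \<subseteq> supp p \<union> supp q"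
    by (auto simp: supp_def fa_add_def)
  ultimately show ?thesis by (meson fin_def finite_UnI finite_subset)
qed

lemma ev_add: assumes "fin p" "fin q" shows "ev (fa_add p q) = ev p + ev q"
proof -
  let ?S = "supp p \<union> supp q"
  have f: "finite ?S" using assms by (simp add: fin_def)
  have s: "supp (fa_add p q) \<subseteq> ?S" by (auto simp: supp_def fa_add_def)
  have "ev (fa_add p q) = evS ?S (fa_add p q)" using evS_eq[OF f s] by simp
  also have "\<dots> = evS ?S p + evS ?S q"
    by (simp add: evS_def fa_add_def smult_add_left sum.distrib)
  also have "\<dots> = ev p + ev q" using f by (simp add: evS_eq)
  finally show ?thesis .
qed

lemma fin_sub: "fin p \<Longrightarrow> fin q \<Longrightarrow> fin (fa_sub p q)"
proof -
  assume "fin p" "fin q"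
  moreover have "supp (fa_sub p q) \<subseteq> supp p \<union> supp q"
    by (auto simp: supp_def fa_sub_def)
  ultimately show ?thesis by (meson fin_def finite_UnI finite_subset)
qed

lemma ev_sub: assumes "fin p" "fin q" shows "ev (fa_sub p q) = ev p - ev q"
proof -
  let ?S = "supp p \<union> supp q"
  have f: "finite ?S" using assms by (simp add: fin_def)
  have s: "supp (fa_sub p q) \<subseteq> ?S" by (auto simp: supp_def fa_sub_def)
  have "ev (fa_sub p q) = evS ?S (fa_sub p q)" using evS_eq[OF f s] by simp
  also have "\<dots> = evS ?S p - evS ?S q"
    by (simp add: evS_def fa_sub_def smult_diff_left sum_subtractf)
  also have "\<dots> = ev p - ev q" using f by (simp add: evS_eq)
  finally show ?thesis .
qed

lemma fin_smult: "fin p \<Longrightarrow> fin (fa_smult c p)"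
proof -
  assume "fin p"
  moreover have "supp (fa_smult c p) \<subseteq> supp p"
    by (auto simp: supp_def fa_smult_def)
  ultimately show ?thesis by (meson fin_def finite_subset)
qed

lemma ev_smult: assumes "fin p" shows "ev (fa_smult c p) = smult c (ev p)"
proof -
  have f: "finite (supp p)" using assms by (simp add: fin_def)
  have s: "supp (fa_smult c p) \<subseteq> supp p" by (auto simp: supp_def fa_smult_def)
  have "ev (fa_smult c p) = evS (supp p) (fa_smult c p)" using evS_eq[OF f s] by simp
  also have "\<dots> = smult c (evS (supp p) p)"
    by (simp add: evS_def fa_smult_def smult_sum_right smult_smult)
  also have "\<dots> = smult c (ev p)" by (simp add: ev_def)
  finally show ?thesis .
qed

lemma split_finite: "finite {(a, b). a @ b = (w::'a list)}"
proof -
  have "{(a, b). a @ b = w} \<subseteq> (\<lambda>k. (take k w, drop k w)) ` {..length w}"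
  proof
    fix x assume "x \<in> {(a, b). a @ b = w}"
    then obtain a b where x: "x = (a, b)" "a @ b = w" by auto
    then show "x \<in> (\<lambda>k. (take k w, drop k w)) ` {..length w}"
      by (intro image_eqI[of _ _ "length a"]) auto
  qed
  then show ?thesis by (rule finite_subset) simp
qed

lemma supp_mult: "supp (fa_mult p q) \<subseteq> (\<lambda>(a, b). a @ b) ` (supp p \<times> supp q)"
proof
  fix w assume "w \<in> supp (fa_mult p q)"
  then have "(\<Sum>ab\<in>{(a, b). a @ b = w}. p (fst ab) * q (snd ab)) \<noteq> 0"
    by (simp add: supp_def fa_mult_def)
  then obtain ab where "ab \<in> {(a, b). a @ b = w}" "p (fst ab) * q (snd ab) \<noteq> 0"
    by (meson sum.not_neutral_contains_not_neutral)
  then show "w \<in> (\<lambda>(a, b). a @ b) ` (supp p \<times> supp q)"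
    by (intro image_eqI[of _ _ ab]) (auto simp: supp_def)
qed

lemma fin_mult: "fin p \<Longrightarrow> fin q \<Longrightarrow> fin (fa_mult p q)"
  unfolding fin_def by (rule finite_subset[OF supp_mult]) simp

lemma ev_mult: assumes "fin p" "fin q" shows "ev (fa_mult p q) = ev p * ev q"
proof -
  let ?Sp = "supp p" and ?Sq = "supp q"
  let ?W = "(\<lambda>(a, b). a @ b) ` (?Sp \<times> ?Sq)"
  define h where "h = (\<lambda>ab. smult (p (fst ab) * q (snd ab)) (wv (fst ab @ snd ab)))"
  have fp: "finite ?Sp" and fq: "finite ?Sq" using assms by (auto simp: fin_def)
  have fW: "finite ?W" using fp fq by simp
  have "ev p * ev q = (\<Sum>a\<in>?Sp. smult (p a) (wv a)) * (\<Sum>b\<in>?Sq. smult (q b) (wv b))"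
    by (simp add: ev_def evS_def)
  also have "\<dots> = (\<Sum>a\<in>?Sp. \<Sum>b\<in>?Sq. smult (p a) (wv a) * smult (q b) (wv b))"
    by (simp add: sum_product)
  also have "\<dots> = (\<Sum>ab\<in>?Sp \<times> ?Sq. h ab)"
    by (simp add: sum.cartesian_product h_def wv_append mult.commute mult.left_commute split_def)
  also have "\<dots> = (\<Sum>w\<in>?W. \<Sum>ab\<in>{ab. ab \<in> ?Sp \<times> ?Sq \<and> fst ab @ snd ab = w}. h ab)"
    by (rule sum.group[symmetric]) (use fp fq in auto)
  also have "\<dots> = (\<Sum>w\<in>?W. smult (fa_mult p q w) (wv w))"
  proof (rule sum.cong[OF refl])
    fix w
    have "(\<Sum>ab\<in>{ab. ab \<in> ?Sp \<times> ?Sq \<and> fst ab @ snd ab = w}. h ab)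
        = (\<Sum>ab\<in>{(a, b). a @ b = w}. h ab)"
      by (rule sum.mono_neutral_left) (auto simp: split_finite h_def supp_def)
    also have "\<dots> = (\<Sum>ab\<in>{(a, b). a @ b = w}. smult (p (fst ab) * q (snd ab)) (wv w))"
      by (rule sum.cong) (auto simp: h_def)
    also have "\<dots> = smult (fa_mult p q w) (wv w)"
      by (simp add: fa_mult_def smult_sum)
    finally show "(\<Sum>ab\<in>{ab. ab \<in> ?Sp \<times> ?Sq \<and> fst ab @ snd ab = w}. h ab) = smult (fa_mult p q w) (wv w)" .
  qed
  also have "\<dots> = ev (fa_mult p q)"
    using evS_eq[OF fW supp_mult] by (simp add: evS_def)
  finally show ?thesis by simp
qed


lemma fin_tprod: "fin (tprod gs k :: 'k::field fa)"
proof (induction gs arbitrary: k)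
  case Nil then show ?case by (simp add: fin_one fin_zero)
next
  case (Cons g gs) then show ?case
    by (simp add: fin_sub fin_mult fin_gen fin_zero)
qed

definition tP :: "gen list \<Rightarrow> 'k::field poly poly" where
  "tP gs = prod_list (map (\<lambda>g. [:- phi g, 1:]) gs)"

lemma ev_tprod: "ev (tprod gs k :: 'k::field fa) = coeff (tP gs :: 'k poly poly) k"
proof (induction gs arbitrary: k)
  case Nil then show ?case by (simp add: ev_one ev_zero tP_def coeff_1)
next
  case (Cons g gs)
  have e1: "ev (if k = 0 then fa_zero else tprod gs (k - 1) :: 'k fa)
      = (if k = 0 then 0 else coeff (tP gs :: 'k poly poly) (k - 1))"
    using Cons by (simp add: ev_zero)
  have f1: "fin (if k = 0 then fa_zero else tprod gs (k - 1) :: 'k fa)"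
    by (simp add: fin_zero fin_tprod)
  have "ev (tprod (g # gs) k :: 'k fa)
      = (if k = 0 then 0 else coeff (tP gs :: 'k poly poly) (k - 1)) - phi g * coeff (tP gs) k"
    by (simp only: tprod.simps ev_sub[OF f1 fin_mult[OF fin_gen fin_tprod]]
          ev_mult[OF fin_gen fin_tprod] e1 ev_gen Cons)
  also have "\<dots> = coeff (tP (g # gs)) k"
    by (simp add: tP_def coeff_pCons')
  finally show ?case .
qed

lemma qrels_ev: "r \<in> qrels n \<Longrightarrow> fin (r :: 'k::field fa) \<and> ev r = 0"
  unfolding qrels_def
  by (auto simp: fin_sub fin_add fin_mult fin_gen ev_sub ev_add ev_mult ev_gen phi_def
      mult.commute)

lemma qideal_ev: "p \<in> qideal n \<Longrightarrow> fin (p :: 'k::field fa) \<and> ev p = 0"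
proof (induction rule: qideal.induct)
  case qideal_zero then show ?case by (simp add: fin_zero ev_zero)
next
  case (qideal_step r p c u v)
  then have r: "fin r" "ev r = 0" using qrels_ev by blast+
  have f: "fin (fa_mult (fa_mult (fa_mon u) r) (fa_mon v))"
    by (simp add: fin_mult fin_mon r)
  show ?case using qideal_step r f
    by (simp add: fin_add fin_smult ev_add ev_smult ev_mult fin_mult fin_mon)
qed

lemma qeq_ev: "fin p \<Longrightarrow> fin q \<Longrightarrow> qeq n p q \<Longrightarrow> ev (p :: 'k::field fa) = ev q"
  unfolding qeq_def using qideal_ev ev_sub by fastforce

lemma monom_inj: "(monom 1 a :: 'k::field poly) = monom 1 b \<longleftrightarrow> a = b"
  by (simp add: monom_eq_iff')

lemma cancel_lemma:
  assumes "a \<noteq> b"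
    and "((monom 1 a - monom 1 b) * monom 1 c :: 'k::field poly) = monom 1 a * (monom 1 a - monom 1 b)"
  shows "c = a"
proof -
  have "(monom 1 a - monom 1 b) * (monom 1 c - monom 1 a) = (0 :: 'k poly)"
    using assms(2) by (simp add: algebra_simps)
  moreover have "(monom 1 a - monom 1 b :: 'k poly) \<noteq> 0" using assms(1) monom_inj by force
  ultimately have "(monom 1 c :: 'k poly) = monom 1 a" by simp
  then show ?thesis using monom_inj by blast
qed

lemma env_snd:
  assumes "e \<in> du_envelope TYPE('k::field) n Z"
  shows "snd e \<in> snd ` Z"
  using assms
proof (induction rule: du_envelope.induct)
  case (env_base z) then show ?case by simp
next
  case (env_u p q xi)
  then have ne: "snd p \<noteq> snd q" by (auto simp: u_op_def prod_eq_iff)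
  have "ev (fa_mult (fa_sub (fa_gen p) (fa_gen q)) (fa_gen p) :: 'k fa)
      = ev (fa_mult (fa_gen xi) (fa_sub (fa_gen p) (fa_gen q)) :: 'k fa)"
    using \<open>u_op TYPE('k) n p q xi\<close> unfolding u_op_def
    by (intro qeq_ev[where n=n]) (auto simp: fin_mult fin_sub fin_gen)
  then have "((monom 1 (snd p) - monom 1 (snd q)) * monom 1 (snd xi) :: 'k poly)
      = monom 1 (snd p) * (monom 1 (snd p) - monom 1 (snd q))"
    by (simp only: ev_mult[OF fin_sub[OF fin_gen fin_gen] fin_gen]
        ev_mult[OF fin_gen fin_sub[OF fin_gen fin_gen]] ev_sub[OF fin_gen fin_gen] ev_gen phi_def
        mult.commute)
  then have "snd xi = snd p" using cancel_lemma ne by blast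
  then show ?case using env_u by simp
next
  case (env_d p q eta)
  have ne: "snd p \<noteq> snd q"
  proof
    assume eq: "snd p = snd q"
    have "snd p \<notin> fst p" "snd q \<notin> fst q" using \<open>d_op TYPE('k) n p q eta\<close>
      by (auto simp: d_op_def pseudo_roots_def)
    moreover have "insert (snd p) (fst p) = insert (snd q) (fst q)" using \<open>d_op TYPE('k) n p q eta\<close>
      by (simp add: d_op_def)
    ultimately have "fst p = fst q" using eq
      by (metis Diff_insert_absorb)
    then show False using eq \<open>d_op TYPE('k) n p q eta\<close> by (auto simp: d_op_def prod_eq_iff)
  qed
  have "ev (fa_mult (fa_sub (fa_gen p) (fa_gen q)) (fa_gen eta) :: 'k fa)
      = ev (fa_mult (fa_gen p) (fa_sub (fa_gen p) (fa_gen q)) :: 'k fa)"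
    using \<open>d_op TYPE('k) n p q eta\<close> unfolding d_op_def
    by (intro qeq_ev[where n=n]) (auto simp: fin_mult fin_sub fin_gen)
  then have "((monom 1 (snd p) - monom 1 (snd q)) * monom 1 (snd eta) :: 'k poly)
      = monom 1 (snd p) * (monom 1 (snd p) - monom 1 (snd q))"
    by (simp only: ev_mult[OF fin_sub[OF fin_gen fin_gen] fin_gen]
        ev_mult[OF fin_gen fin_sub[OF fin_gen fin_gen]] ev_sub[OF fin_gen fin_gen] ev_gen phi_def)
  then have "snd eta = snd p" using cancel_lemma ne by blast
  then show ?case using env_d by simp
qed

lemma poly_prod_list_map: "poly (prod_list (map f xs)) y = prod_list (map (\<lambda>x. poly (f x) y) xs)"
  by (induction xs) auto

lemma defining_cover:
  assumes "defining TYPE('k::field) n Y"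
  shows "{1..n} \<subseteq> snd ` Y"
proof
  fix i assume i: "i \<in> {1..n}"
  obtain ys where ys: "set ys \<subseteq> Y"
    and eq: "\<And>k. qeq n (tprod ys k :: 'k fa) (tprod (std_roots n) k)"
    using assms unfolding defining_def by blast
  have "\<And>k. coeff (tP ys :: 'k poly poly) k = coeff (tP (std_roots n)) k"
    using eq by (metis ev_tprod qeq_ev fin_tprod)
  then have P: "(tP ys :: 'k poly poly) = tP (std_roots n)" by (rule poly_eqI)
  have mem: "({1..<i}, i) \<in> set (std_roots n)" using i by (auto simp: std_roots_def)
  have "poly (tP (std_roots n) :: 'k poly poly) (monom 1 i) = 0"
    unfolding tP_def poly_prod_list_map using mem
    by (auto simp: prod_list_zero_iff phi_def intro!: image_eqI[of _ _ "({1..<i}, i)"])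
  then have "poly (tP ys :: 'k poly poly) (monom 1 i) = 0" using P by simp
  then obtain g where g: "g \<in> set ys" "(monom 1 i :: 'k poly) = phi g"
    unfolding tP_def poly_prod_list_map by (auto simp: prod_list_zero_iff)
  then have "snd g = i" by (simp add: phi_def monom_inj)
  then show "i \<in> snd ` Y" using g ys by blast
qed

theorem theorem1p4p5:
  fixes n :: nat and Z :: "gen set"
  assumes "Z \<subseteq> pseudo_roots n"
    and "card Z = n"
    and "sufficient TYPE('k::field) n Z"
  shows "inj_on snd Z"
proof -
  obtain Y where Y: "Y \<subseteq> du_envelope TYPE('k) n Z" "defining TYPE('k) n Y"
    using assms(3) unfolding sufficient_def by blast
  have "{1..n} \<subseteq> snd ` Y" using defining_cover[OF Y(2)] .
  also have "\<dots> \<subseteq> snd ` Z" using Y(1) env_snd by blast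
  finally have sub: "{1..n} \<subseteq> snd ` Z" .
  have "pseudo_roots n \<subseteq> Pow {1..n} \<times> {1..n}" by (auto simp: pseudo_roots_def)
  then have fZ: "finite Z" using assms(1) by (meson finite_Pow_iff finite_SigmaI finite_atLeastAtMost finite_subset)
  have "n \<le> card (snd ` Z)" using card_mono[OF finite_imageI[OF fZ] sub] by simp
  moreover have "card (snd ` Z) \<le> card Z" by (rule card_image_le[OF fZ])
  ultimately have "card (snd ` Z) = card Z" using assms(2) by simp
  then show ?thesis by (rule eq_card_imp_inj_on[OF fZ])
qed

end
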